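(* Let $\{\widehat X_n(x):x\in\mathbb{R}^2\}_{n\ge0}$ be an i.i.d. sequence of random fields whose variables $\widehat X_n(x)$ are all mutually independent with standard Fréchet distribution. Set $X_n(x)=\tfrac23\widehat X_n(x)\vee\tfrac13\widehat X_{n-1}(x)$, let $\{Z_n\}_{n\ge1}$ be i.i.d. standard Fréchet random variables independent of $\{\widehat X_n\}$, set $Z_n(x)=Z_n$ for all $x$, let $\alpha:\mathbb{R}^2\to(0,\infty)$, and $Y_n(x)=X_n(x)\vee Z_n^{1/\alpha(x)}$. Then for all $n\ge1$ and $x\in\mathbb{R}^2$, $r\ge1$: $$\lambda(Y_{n+r}(x)\mid Y_n(x))=\begin{cases}0,& \alpha(x)<1 \text{ or } r>1,\\ 1/6,& \alpha(x)=1\text{ and } r=1,\\ 1/3,& \alpha(x)>1 \text{ and } r=1;\end{cases}$$ for $x\neq x'$ and $r\ge1$, $\lambda(Y_{n+r}(x')\mid Y_n(x))=0$; and for $x\ne x'$, $$\lambda(Y_n(x')\mid Y_n(x))=\begin{cases}1,& \alpha(x')\le\alpha(x)<1,\\ 1/2,& \alpha(x')\le\alpha(x)=1,\\ 0,&\text{otherwise.}\end{cases}$$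
   Context: A random variable has the standard (unit) Fréchet distribution if $P(\cdot\le z)=e^{-1/z}$ for $z>0$. For random variables $U,V$, the tail dependence coefficient is $\lambda(V\mid U)=\lim_{y\to\infty}P(V>y\mid U>y)$. $a\vee b=\max(a,b)$. *)

theory Defs
  imports "HOL-Probability.Probability"
begin

definition std_frechet :: "'a measure \<Rightarrow> ('a \<Rightarrow> real) \<Rightarrow> bool" where
  "std_frechet M V \<longleftrightarrow> V \<in> borel_measurable M \<and>
     (\<forall>z>0. measure M {\<omega> \<in> space M. V \<omega> \<le> z} = exp (- 1 / z))"

definition tail_dep :: "'a measure \<Rightarrow> ('a \<Rightarrow> real) \<Rightarrow> ('a \<Rightarrow> real) \<Rightarrow> real \<Rightarrow> bool" where
  "tail_dep M V U L \<longleftrightarrow>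
     ((\<lambda>y. measure M {\<omega> \<in> space M. V \<omega> > y \<and> U \<omega> > y}
            / measure M {\<omega> \<in> space M. U \<omega> > y}) \<longlongrightarrow> L) at_top"

definition Xfield :: "(nat \<Rightarrow> real^2 \<Rightarrow> 'a \<Rightarrow> real) \<Rightarrow> nat \<Rightarrow> real^2 \<Rightarrow> 'a \<Rightarrow> real" where
  "Xfield Xh n x \<omega> = max (2/3 * Xh n x \<omega>) (1/3 * Xh (n - 1) x \<omega>)"

definition Yfield :: "(nat \<Rightarrow> real^2 \<Rightarrow> 'a \<Rightarrow> real) \<Rightarrow> (nat \<Rightarrow> 'a \<Rightarrow> real) \<Rightarrow> (real^2 \<Rightarrow> real)
    \<Rightarrow> nat \<Rightarrow> real^2 \<Rightarrow> 'a \<Rightarrow> real" where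
  "Yfield Xh Z \<alpha> n x \<omega> = max (Xfield Xh n x \<omega>) (Z n \<omega> powr (1 / \<alpha> x))"

end

theory Submission
  imports Defs
begin


lemma g_lim:
  fixes s :: "'b \<Rightarrow> real"
  assumes "(s \<longlongrightarrow> 0) F" "eventually (\<lambda>y. s y \<noteq> 0) F"
  shows "((\<lambda>y. (1 - exp (- s y)) / s y) \<longlongrightarrow> 1) F"
proof -
  have d: "((\<lambda>t::real. 1 - exp(-t)) has_field_derivative 1) (at 0)"
    by (auto intro!: derivative_eq_intros)
  hence "((\<lambda>t. ((1 - exp(-t)) - (1 - exp(-0)))/(t - 0)) \<longlongrightarrow> 1) (at (0::real))"
    by (simp only: has_field_derivative_iff)
  hence L: "((\<lambda>t. (1 - exp(-t))/t) \<longlongrightarrow> 1) (at (0::real))" by simp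
  have "filterlim s (at 0) F" using assms by (auto simp add: filterlim_at elim: eventually_mono)
  from filterlim_compose[OF L this] show ?thesis .
qed

lemma aux_inv: "q > 0 \<Longrightarrow> 1 / (1 + inverse q) = q / (q + (1::real))"
  by (simp add: field_simps)

definition cval :: "real \<Rightarrow> real" where
  "cval a = (if a < 1 then 0 else if a = 1 then 1/2 else 1)"

lemma c_lim:
  assumes "a > 0"
  shows "((\<lambda>y::real. (1/y) / (1/y + y powr -a)) \<longlongrightarrow> cval a) at_top"
proof -
  have e1: "(1/y) / (1/y + y powr -a) = 1 / (1 + y powr (1-a))" if "y > 0" for y
  proof -
    have "y powr (1-a) = y * y powr -a" using that powr_add[of y 1 "-a"] by simp
    thus ?thesis using that by (simp add: field_simps)
  qed
  have e2: "(1/y) / (1/y + y powr -a) = y powr (a-1) / (y powr (a-1) + 1)" if "y > 0" for y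
  proof -
    have "y powr (1-a) = inverse (y powr (a-1))" using powr_minus[of y "a-1"] by simp
    moreover have "y powr (a-1) > 0" using that by simp
    ultimately show ?thesis unfolding e1[OF that] using aux_inv by simp
  qed
  consider "a < 1" | "a = 1" | "a > 1" by linarith
  then show ?thesis
  proof cases
    case 1
    have "((\<lambda>y::real. y powr (a-1)) \<longlongrightarrow> 0) at_top"
      using 1 by (intro tendsto_neg_powr filterlim_ident) auto
    hence "((\<lambda>y::real. y powr (a-1) / (y powr (a-1) + 1)) \<longlongrightarrow> 0 / (0 + 1)) at_top"
      by (intro tendsto_intros) auto
    hence "((\<lambda>y::real. y powr (a-1) / (y powr (a-1) + 1)) \<longlongrightarrow> cval a) at_top"
      using 1 by (simp add: cval_def)
    then show ?thesis
      by (rule Lim_transform_eventually) (rule eventually_mono[OF eventually_gt_at_top[of 0]], simp only: e2)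
  next
    case 2
    have "((\<lambda>y::real. 1/2) \<longlongrightarrow> cval a) at_top" using 2 by (simp add: cval_def)
    then show ?thesis
      by (rule Lim_transform_eventually) (auto intro!: eventually_mono[OF eventually_gt_at_top[of 0]] simp: 2 powr_minus field_simps)
  next
    case 3
    have "((\<lambda>y::real. y powr (1-a)) \<longlongrightarrow> 0) at_top"
      using 3 by (intro tendsto_neg_powr filterlim_ident) auto
    hence "((\<lambda>y::real. 1 / (1 + y powr (1-a))) \<longlongrightarrow> 1 / (1 + 0)) at_top"
      by (intro tendsto_intros) auto
    hence "((\<lambda>y::real. 1 / (1 + y powr (1-a))) \<longlongrightarrow> cval a) at_top"
      using 3 by (simp add: cval_def)
    then show ?thesis
      by (rule Lim_transform_eventually) (rule eventually_mono[OF eventually_gt_at_top[of 0]], simp only: e1)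
  qed
qed

lemma exp_split: "exp (-(u + w)) = exp (-u) * exp (-(w::real))"
  by (simp add: exp_add[symmetric])

lemma s_lim:
  assumes "a > 0"
  shows "((\<lambda>y::real. 1/y + y powr -a) \<longlongrightarrow> 0) at_top"
proof -
  have "((\<lambda>y::real. y powr -a) \<longlongrightarrow> 0) at_top"
    using assms by (intro tendsto_neg_powr filterlim_ident) auto
  moreover have "((\<lambda>y::real. 1/y) \<longlongrightarrow> 0) at_top"
    by (rule tendsto_divide_0[OF tendsto_const filterlim_at_top_imp_at_infinity[OF filterlim_ident]])
  ultimately show ?thesis using tendsto_add[of _ 0 _ _ 0] by fastforce
qed

lemma inv_lim: "((\<lambda>y::real. 1/y) \<longlongrightarrow> 0) at_top"
  by (rule tendsto_divide_0[OF tendsto_const filterlim_at_top_imp_at_infinity[OF filterlim_ident]])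

lemma s_pos_ev: "a > 0 \<Longrightarrow> eventually (\<lambda>y::real. 1/y + y powr -a \<noteq> 0) at_top"
  by (rule eventually_mono[OF eventually_gt_at_top[of 0]]) (smt (verit) divide_pos_pos powr_gt_zero)

lemma g_s_lim:
  assumes "a > 0"
  shows "((\<lambda>y::real. inverse ((1 - exp (-(1/y + y powr -a))) / (1/y + y powr -a))) \<longlongrightarrow> 1) at_top"
  using tendsto_inverse[OF g_lim[OF s_lim[OF assms] s_pos_ev[OF assms]]] by simp

lemma alg1:
  fixes P E u s :: real
  assumes "P \<noteq> 1" "u \<noteq> 0" "s \<noteq> 0"
  shows "(1 - P - P + P^2 * E) / (1 - P) =
    (1 - P) + P^2 * ((1 - E) / (-(u/3)) * (1/3) * (u / s) * inverse ((1 - P) / s))"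
  using assms by (simp add: field_simps power2_eq_square)

lemma L1:
  assumes "a > 0"
  shows "((\<lambda>y. (1 - exp(-(1/y + y powr -a)) - exp(-(1/y + y powr -a))
              + exp(-(5/(3*y) + 2 * y powr -a))) / (1 - exp(-(1/y + y powr -a))))
          \<longlongrightarrow> cval a / 3) at_top"
proof -
  let ?s = "\<lambda>y::real. 1/y + y powr -a"
  let ?P = "\<lambda>y. exp (-(?s y))"
  have lim: "((\<lambda>y. (1 - ?P y) + ?P y ^ 2 * ((1 - exp (-(-(1/(3*y))))) / (-(1/(3*y))) * (1/3) * ((1/y) / ?s y)
         * inverse ((1 - ?P y) / ?s y))) \<longlongrightarrow> (1 - exp (-0)) + exp (-0) ^ 2 * (1 * (1/3) * cval a * 1)) at_top"
  proof (intro tendsto_intros s_lim assms c_lim g_s_lim g_lim)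
    show "((\<lambda>y::real. - (1 / (3 * y))) \<longlongrightarrow> 0) at_top"
      using tendsto_minus[OF tendsto_mult[OF tendsto_const inv_lim, of "1/3"]] by simp
    show "\<forall>\<^sub>F x in at_top. - (1 / (3 * (x::real))) \<noteq> 0"
      by (rule eventually_mono[OF eventually_gt_at_top[of 0]]) simp
  qed
  show ?thesis
  proof (rule Lim_transform_eventually[OF _ eventually_mono[OF eventually_gt_at_top[of 0]]])
    show "((\<lambda>y. (1 - ?P y) + ?P y ^ 2 * ((1 - exp (-(-(1/(3*y))))) / (-(1/(3*y))) * (1/3) * ((1/y) / ?s y)
         * inverse ((1 - ?P y) / ?s y))) \<longlongrightarrow> cval a / 3) at_top"
      using lim by simp
  next
    fix y :: real assume y: "y > 0"
    have sp: "?s y > 0" using y by (smt (verit) divide_pos_pos powr_gt_zero)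
    have P1: "?P y \<noteq> 1" using sp by simp
    have e: "exp(-(5/(3*y) + 2 * y powr -a)) = ?P y ^ 2 * exp (-(-(1/(3*y))))"
      by (simp add: exp_add[symmetric] power2_eq_square field_simps)
    show "(1 - ?P y) + ?P y ^ 2 * ((1 - exp (-(-(1/(3*y))))) / (-(1/(3*y))) * (1/3) * ((1/y) / ?s y)
         * inverse ((1 - ?P y) / ?s y)) = (1 - ?P y - ?P y + exp(-(5/(3*y) + 2 * y powr -a))) / (1 - ?P y)"
      unfolding e using alg1[OF P1, of "1/y" "exp (-(-(1/(3*y))))"] y sp by simp
  qed
qed

lemma L2:
  fixes a b :: real
  assumes "a > 0" "b > 0"
  shows "((\<lambda>y. (1 - exp(-(1/y + y powr -b)) - exp(-(1/y + y powr -a))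
              + exp(-(1/y + y powr -b)) * exp(-(1/y + y powr -a))) / (1 - exp(-(1/y + y powr -a))))
          \<longlongrightarrow> 0) at_top"
proof -
  have lim: "((\<lambda>y. 1 - exp(-(1/y + y powr -b))) \<longlongrightarrow> 1 - exp (-0)) at_top"
    by (intro tendsto_intros s_lim[OF assms(2)])
  show ?thesis
  proof (rule Lim_transform_eventually[OF _ eventually_mono[OF eventually_gt_at_top[of 0]]])
    show "((\<lambda>y. 1 - exp(-(1/y + y powr -b))) \<longlongrightarrow> 0) at_top" using lim by simp
  next
    fix y :: real assume y: "y > 0"
    have sp: "1/y + y powr -a > 0" using y by (smt (verit) divide_pos_pos powr_gt_zero)
    hence "1 - exp(-(1/y + y powr -a)) \<noteq> 0" by simp
    thus "1 - exp(-(1/y + y powr -b)) = (1 - exp(-(1/y + y powr -b)) - exp(-(1/y + y powr -a))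
              + exp(-(1/y + y powr -b)) * exp(-(1/y + y powr -a))) / (1 - exp(-(1/y + y powr -a)))"
      by (simp add: field_simps)
  qed
qed

definition tval :: "real \<Rightarrow> real \<Rightarrow> real" where
  "tval a b = (if b \<le> a \<and> a < 1 then 1 else if b \<le> a \<and> a = 1 then 1/2 else 0)"

lemma alg3a:
  fixes p qa qb u s :: real
  assumes "p * qa \<noteq> 1" "u \<noteq> 0" "s \<noteq> 0"
  shows "(1 - p * qb - p * qa + p * p * qb) / (1 - p * qa)
     = 1 - p * qb * ((1 - p) / u * (u / s) * inverse ((1 - p * qa) / s))"
  using assms by (simp add: field_simps)

lemma alg3b:
  fixes p qa qb w s :: real
  assumes "p * qa \<noteq> 1" "w \<noteq> 0" "s \<noteq> 0"
  shows "(1 - p * qb - p * qa + p * p * qa) / (1 - p * qa)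
     = (1 - p) + p * ((1 - qb) / w * (w / s) * inverse ((1 - p * qa) / s))"
  using assms by (simp add: field_simps)

lemma L3:
  assumes "a > 0" "b > 0"
  shows "((\<lambda>y. (1 - exp(-(1/y + y powr -b)) - exp(-(1/y + y powr -a))
              + exp(-(2/y + max (y powr -a) (y powr -b)))) / (1 - exp(-(1/y + y powr -a))))
          \<longlongrightarrow> tval a b) at_top"
proof -
  let ?s = "\<lambda>y::real. 1/y + y powr -a"
  have ex: "exp(-(1/y + y powr -c)) = exp (-(1/y)) * exp (- (y powr -c))" for y c :: real
    by (rule exp_split)
  have ex2: "exp(-(2/y + c)) = exp (-(1/y)) * exp (-(1/y)) * exp (- c)" for y c :: real
    by (simp add: exp_add[symmetric] field_simps)
  show ?thesis
  proof (cases "b \<le> a")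
    case True
    have lim: "((\<lambda>y. 1 - exp (-(1/y)) * exp (-(y powr -b)) * ((1 - exp (-(1/y))) / (1/y) * ((1/y) / ?s y)
         * inverse ((1 - exp (-(1/y)) * exp (-(y powr -a))) / ?s y))) \<longlongrightarrow>
         1 - exp (-0) * exp (-0) * (1 * cval a * 1)) at_top"
    proof (intro tendsto_intros c_lim g_lim inv_lim assms tendsto_neg_powr filterlim_ident)
      show "\<forall>\<^sub>F x in at_top. 1 / (x::real) \<noteq> 0"
        by (rule eventually_mono[OF eventually_gt_at_top[of 0]]) simp
      show "- b < 0" using assms by simp
      show "((\<lambda>y. inverse ((1 - exp (-(1/y)) * exp (-(y powr -a))) / ?s y)) \<longlongrightarrow> 1) at_top"
        using g_s_lim[OF assms(1)] by (simp only: ex)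
    qed
    have tv: "tval a b = 1 - cval a" using True by (simp add: tval_def cval_def)
    show ?thesis
    proof (rule Lim_transform_eventually[OF _ eventually_mono[OF eventually_gt_at_top[of 1]]])
      show "((\<lambda>y. 1 - exp (-(1/y)) * exp (-(y powr -b)) * ((1 - exp (-(1/y))) / (1/y) * ((1/y) / ?s y)
         * inverse ((1 - exp (-(1/y)) * exp (-(y powr -a))) / ?s y))) \<longlongrightarrow> tval a b) at_top"
        using lim tv by simp
    next
      fix y :: real assume y: "y > 1"
      have sp: "?s y > 0" using y by (smt (verit) divide_pos_pos powr_gt_zero)
      have P1: "exp (-(1/y)) * exp (-(y powr -a)) \<noteq> 1" using sp by (simp add: ex[symmetric])
      have mx: "max (y powr -a) (y powr -b) = y powr -b"
        using True y by (simp add: powr_mono max_def)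
      show "1 - exp (-(1/y)) * exp (-(y powr -b)) * ((1 - exp (-(1/y))) / (1/y) * ((1/y) / ?s y)
         * inverse ((1 - exp (-(1/y)) * exp (-(y powr -a))) / ?s y)) =
         (1 - exp(-(1/y + y powr -b)) - exp(-(1/y + y powr -a))
              + exp(-(2/y + max (y powr -a) (y powr -b)))) / (1 - exp(-(1/y + y powr -a)))"
        unfolding mx ex ex2 using alg3a[OF P1, of "1/y" "?s y" "exp (-(y powr -b))"] y sp
        by (simp add: mult.assoc)
    qed
  next
    case False
    have wlim: "((\<lambda>y. y powr -b / ?s y) \<longlongrightarrow> 0) at_top"
    proof (rule tendsto_sandwich[OF _ _ tendsto_const])
      show "\<forall>\<^sub>F y in at_top. 0 \<le> y powr -b / ?s y"
        by (rule eventually_mono[OF eventually_gt_at_top[of 0]]) simp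
      show "\<forall>\<^sub>F y in at_top. y powr -b / ?s y \<le> y powr (a - b)"
      proof (rule eventually_mono[OF eventually_gt_at_top[of 0]])
        fix y :: real assume y: "y > 0"
        have "y powr -b / ?s y \<le> y powr -b / y powr -a"
          using y by (intro divide_left_mono) (auto intro!: mult_pos_pos add_pos_pos)
        also have "\<dots> = y powr (a - b)"
          using y by (simp add: powr_minus powr_diff field_simps)
        finally show "y powr -b / ?s y \<le> y powr (a - b)" .
      qed
      show "((\<lambda>y::real. y powr (a - b)) \<longlongrightarrow> 0) at_top"
        using False by (intro tendsto_neg_powr filterlim_ident) auto
    qed
    have lim: "((\<lambda>y. (1 - exp (-(1/y))) + exp (-(1/y)) * ((1 - exp (-(y powr -b))) / (y powr -b) * (y powr -b / ?s y)
         * inverse ((1 - exp (-(1/y)) * exp (-(y powr -a))) / ?s y))) \<longlongrightarrow>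
         (1 - exp (-0)) + exp (-0) * (1 * 0 * 1)) at_top"
    proof (intro tendsto_intros wlim g_lim inv_lim assms tendsto_neg_powr filterlim_ident)
      show "\<forall>\<^sub>F x in at_top. (x::real) powr -b \<noteq> 0"
        by (rule eventually_mono[OF eventually_gt_at_top[of 0]]) simp
      show "- b < 0" using assms by simp
      show "((\<lambda>y. inverse ((1 - exp (-(1/y)) * exp (-(y powr -a))) / ?s y)) \<longlongrightarrow> 1) at_top"
        using g_s_lim[OF assms(1)] by (simp only: ex)
    qed
    have tv: "tval a b = 0" using False by (simp add: tval_def)
    show ?thesis
    proof (rule Lim_transform_eventually[OF _ eventually_mono[OF eventually_gt_at_top[of 1]]])
      show "((\<lambda>y. (1 - exp (-(1/y))) + exp (-(1/y)) * ((1 - exp (-(y powr -b))) / (y powr -b) * (y powr -b / ?s y)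
         * inverse ((1 - exp (-(1/y)) * exp (-(y powr -a))) / ?s y))) \<longlongrightarrow> tval a b) at_top"
        using lim tv by simp
    next
      fix y :: real assume y: "y > 1"
      have sp: "?s y > 0" using y by (smt (verit) divide_pos_pos powr_gt_zero)
      have P1: "exp (-(1/y)) * exp (-(y powr -a)) \<noteq> 1" using sp by (simp add: ex[symmetric])
      have mx: "max (y powr -a) (y powr -b) = y powr -a"
        using False y by (simp add: powr_mono max_def)
      show "(1 - exp (-(1/y))) + exp (-(1/y)) * ((1 - exp (-(y powr -b))) / (y powr -b) * (y powr -b / ?s y)
         * inverse ((1 - exp (-(1/y)) * exp (-(y powr -a))) / ?s y)) =
         (1 - exp(-(1/y + y powr -b)) - exp(-(1/y + y powr -a))
              + exp(-(2/y + max (y powr -a) (y powr -b)))) / (1 - exp(-(1/y + y powr -a)))"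
        unfolding mx ex ex2 using alg3b[OF P1, of "y powr -b" "?s y" "exp (-(y powr -b))"] y sp
        by (simp add: mult.assoc)
    qed
  qed
qed



definition Sset :: "real \<Rightarrow> real \<Rightarrow> real set" where
  "Sset a y = {z. z powr (1/a) \<le> y}"

lemma Sset_borel: "Sset a y \<in> sets borel"
proof -
  have "Measurable.pred borel (\<lambda>z::real. z powr (1/a) \<le> y)" by measurable
  thus ?thesis unfolding Sset_def pred_def by simp
qed

lemma powr_inv_le_iff:
  fixes a z y :: real
  assumes "a > 0" "z > 0" "y > 0"
  shows "(z powr (1/a) \<le> y) = (z \<le> y powr a)"
proof
  assume "z powr (1/a) \<le> y"
  hence "(z powr (1/a)) powr a \<le> y powr a" using assms powr_mono2[of a "z powr (1/a)" y] by auto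
  thus "z \<le> y powr a" using assms by (simp add: powr_powr)
next
  assume "z \<le> y powr a"
  hence "z powr (1/a) \<le> (y powr a) powr (1/a)" using assms powr_mono2[of "1/a" z "y powr a"] by auto
  thus "z powr (1/a) \<le> y" using assms by (simp add: powr_powr)
qed

lemma Sset_pos: "a > 0 \<Longrightarrow> y > 0 \<Longrightarrow> Sset a y \<inter> {0<..} = {0<..y powr a}"
  unfolding Sset_def by (auto simp: powr_inv_le_iff)

lemma Sset2_pos: "a > 0 \<Longrightarrow> b > 0 \<Longrightarrow> y > 0 \<Longrightarrow>
   Sset a y \<inter> Sset b y \<inter> {0<..} = {0<..min (y powr a) (y powr b)}"
  unfolding Sset_def by (auto simp: powr_inv_le_iff)

locale frsetup = prob_space M for M :: "'a measure" +
  fixes Xh :: "nat \<Rightarrow> real^2 \<Rightarrow> 'a \<Rightarrow> real" and Z :: "nat \<Rightarrow> 'a \<Rightarrow> real"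
    and \<alpha> :: "real^2 \<Rightarrow> real"
  assumes ind: "indep_vars (\<lambda>_. borel) (\<lambda>i. case i of Inl (n, x) \<Rightarrow> Xh n x | Inr n \<Rightarrow> Z n)
           (range Inl \<union> Inr ` {1..})"
    and fX: "\<And>n x. std_frechet M (Xh n x)"
    and fZ: "\<And>n. n \<ge> 1 \<Longrightarrow> std_frechet M (Z n)"
    and apos: "\<And>x. \<alpha> x > 0"
begin

definition W where "W i = (case i of Inl (n, x) \<Rightarrow> Xh n x | Inr n \<Rightarrow> Z n)"

abbreviation "II \<equiv> (range Inl \<union> Inr ` {1..}) :: ((nat \<times> (real^2)) + nat) set"

lemma indep_prod:
  assumes "finite J" "J \<subseteq> II" "J \<noteq> {}" "\<And>j. j \<in> J \<Longrightarrow> B j \<in> sets borel"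
  shows "prob {\<omega> \<in> space M. \<forall>j\<in>J. W j \<omega> \<in> B j} = (\<Prod>j\<in>J. prob {\<omega> \<in> space M. W j \<omega> \<in> B j})"
proof -
  have "indep_sets (\<lambda>i. {W i -` A \<inter> space M | A. A \<in> sets borel}) II"
    using ind unfolding indep_vars_def2 W_def[abs_def] by simp
  from indep_setsD[OF this assms(2,3,1), of "\<lambda>j. W j -` B j \<inter> space M"]
  have "prob (\<Inter>j\<in>J. W j -` B j \<inter> space M) = (\<Prod>j\<in>J. prob (W j -` B j \<inter> space M))"
    using assms(4) by blast
  moreover have "(\<Inter>j\<in>J. W j -` B j \<inter> space M) = {\<omega> \<in> space M. \<forall>j\<in>J. W j \<omega> \<in> B j}"
    using assms(3) by auto
  moreover have "\<And>j. W j -` B j \<inter> space M = {\<omega> \<in> space M. W j \<omega> \<in> B j}" by auto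
  ultimately show ?thesis by simp
qed

lemma Xmeas: "Xh n x \<in> borel_measurable M" using fX unfolding std_frechet_def by blast
lemma Zmeas: "n \<ge> 1 \<Longrightarrow> Z n \<in> borel_measurable M" using fZ unfolding std_frechet_def by blast

lemma prob_X: "t > 0 \<Longrightarrow> prob {\<omega> \<in> space M. Xh n x \<omega> \<in> {..t}} = exp (- 1 / t)"
  using fX[of n x] unfolding std_frechet_def by simp

lemma prob_Z0: assumes "n \<ge> 1" shows "prob {\<omega> \<in> space M. Z n \<omega> \<le> 0} = 0"
proof (rule ccontr)
  let ?p = "prob {\<omega> \<in> space M. Z n \<omega> \<le> 0}"
  assume "?p \<noteq> 0"
  hence p0: "?p > 0" by (simp add: zero_less_measure_iff)
  have p1: "?p \<le> 1" by simp
  define e where "e = 1 / (1 - ln ?p)"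
  have lnp: "ln ?p \<le> 0" using p0 p1 by simp
  have e0: "e > 0" unfolding e_def using lnp by simp
  have "?p \<le> prob {\<omega> \<in> space M. Z n \<omega> \<le> e}"
    using Zmeas[OF assms] e0 by (intro finite_measure_mono) auto
  also have "\<dots> = exp (- 1 / e)" using fZ[OF assms] e0 unfolding std_frechet_def by simp
  also have "\<dots> = exp (ln ?p - 1)" unfolding e_def using lnp by simp
  also have "\<dots> = ?p / exp 1" using p0 by (simp add: exp_diff)
  also have "\<dots> < ?p" using p0 by (simp add: field_simps)
  finally show False by simp
qed

lemma prob_Z:
  assumes "n \<ge> 1" "t > 0" "S \<in> sets borel" "S \<inter> {0<..} = {0<..t}"
  shows "prob {\<omega> \<in> space M. Z n \<omega> \<in> S} = exp (- 1 / t)"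
proof -
  have zm: "Z n \<in> borel_measurable M" using Zmeas[OF assms(1)] .
  have evA: "{\<omega> \<in> space M. Z n \<omega> \<in> A} \<in> events" if "A \<in> sets borel" for A
  proof -
    have "{\<omega> \<in> space M. Z n \<omega> \<in> A} = Z n -` A \<inter> space M" by blast
    thus ?thesis using measurable_sets[OF zm that] by simp
  qed
  have key: "z \<in> S \<longleftrightarrow> z \<le> t" if "z > 0" for z
  proof -
    have "z \<in> S \<inter> {0<..} \<longleftrightarrow> z \<in> {0<..t}" using assms(4) by simp
    thus ?thesis using that by simp
  qed
  have ev1: "{\<omega> \<in> space M. Z n \<omega> \<in> S \<inter> {0<..}} \<in> events" using assms(3) by (intro evA) auto
  have ev2: "{\<omega> \<in> space M. Z n \<omega> \<in> S \<inter> {..0}} \<in> events" using assms(3) by (intro evA) auto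
  have evt: "{\<omega> \<in> space M. Z n \<omega> \<in> {..t}} \<in> events" by (intro evA) auto
  have ev0: "{\<omega> \<in> space M. Z n \<omega> \<in> {..0}} \<in> events" by (intro evA) auto
  have split: "{\<omega> \<in> space M. Z n \<omega> \<in> S} = {\<omega> \<in> space M. Z n \<omega> \<in> S \<inter> {0<..}} \<union> {\<omega> \<in> space M. Z n \<omega> \<in> S \<inter> {..0}}"
    by auto
  have "prob {\<omega> \<in> space M. Z n \<omega> \<in> S \<inter> {..0}} \<le> prob {\<omega> \<in> space M. Z n \<omega> \<in> {..0}}"
    using ev0 by (intro finite_measure_mono) auto
  hence z2: "prob {\<omega> \<in> space M. Z n \<omega> \<in> S \<inter> {..0}} = 0" using prob_Z0[OF assms(1)]
    by (simp add: measure_nonneg antisym)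
  have "{\<omega> \<in> space M. Z n \<omega> \<in> S \<inter> {0<..}} = {\<omega> \<in> space M. Z n \<omega> \<in> {..t}} - {\<omega> \<in> space M. Z n \<omega> \<in> {..0}}"
  proof -
    { fix \<omega> have "Z n \<omega> \<in> S \<inter> {0<..} \<longleftrightarrow> Z n \<omega> \<in> {..t} - {..0}"
        using key[of "Z n \<omega>"] by (cases "Z n \<omega> > 0") auto }
    thus ?thesis by blast
  qed
  moreover have "prob ({\<omega> \<in> space M. Z n \<omega> \<in> {..t}} - {\<omega> \<in> space M. Z n \<omega> \<in> {..0}}) = prob {\<omega> \<in> space M. Z n \<omega> \<in> {..t}} - prob {\<omega> \<in> space M. Z n \<omega> \<in> {..0}}"
    by (rule finite_measure_Diff[OF evt ev0]) (use assms(2) in auto)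
  ultimately have "prob {\<omega> \<in> space M. Z n \<omega> \<in> S \<inter> {0<..}} = prob {\<omega> \<in> space M. Z n \<omega> \<in> {..t}} - prob {\<omega> \<in> space M. Z n \<omega> \<in> {..0}}"
    by simp
  also have "\<dots> = exp (- 1 / t)" using prob_Z0[OF assms(1)] fZ[OF assms(1)] assms(2)
    unfolding std_frechet_def by simp
  finally have z1: "prob {\<omega> \<in> space M. Z n \<omega> \<in> S \<inter> {0<..}} = exp (- 1 / t)" .
  have "prob {\<omega> \<in> space M. Z n \<omega> \<in> S} = prob {\<omega> \<in> space M. Z n \<omega> \<in> S \<inter> {0<..}} + prob {\<omega> \<in> space M. Z n \<omega> \<in> S \<inter> {..0}}"
    unfolding split using ev1 ev2 by (intro finite_measure_Union) auto
  thus ?thesis using z1 z2 by simp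
qed


abbreviation "Y \<equiv> Yfield Xh Z \<alpha>"

definition JU :: "nat \<Rightarrow> real^2 \<Rightarrow> ((nat \<times> (real^2)) + nat) set" where
  "JU n x = {Inl (n, x), Inl (n - 1, x), Inr n}"

definition BU :: "nat \<Rightarrow> real^2 \<Rightarrow> real \<Rightarrow> ((nat \<times> (real^2)) + nat) \<Rightarrow> real set" where
  "BU n x y j = (case j of Inl (k, _) \<Rightarrow> if k = n then {..3*y/2} else {..3*y} | Inr _ \<Rightarrow> Sset (\<alpha> x) y)"

lemma BU_borel: "BU n x y j \<in> sets borel"
  unfolding BU_def by (auto split: sum.split simp: Sset_borel)

lemma JU_sub: "n \<ge> 1 \<Longrightarrow> JU n x \<subseteq> II"
  unfolding JU_def by auto

lemma JU_fin: "finite (JU n x)" "JU n x \<noteq> {}" unfolding JU_def by auto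

lemma Y_le_iff: "y > 0 \<Longrightarrow> (Y n x \<omega> \<le> y) =
   (Xh n x \<omega> \<le> 3*y/2 \<and> Xh (n-1) x \<omega> \<le> 3*y \<and> Z n \<omega> powr (1 / \<alpha> x) \<le> y)"
  unfolding Yfield_def Xfield_def by auto

lemma marg_set: "n \<ge> 1 \<Longrightarrow> y > 0 \<Longrightarrow>
  {\<omega> \<in> space M. Y n x \<omega> \<le> y} = {\<omega> \<in> space M. \<forall>j\<in>JU n x. W j \<omega> \<in> BU n x y j}"
  unfolding JU_def BU_def using Y_le_iff[of y n x] by (auto simp: W_def Sset_def)

lemma exp3: fixes y a :: real shows "y > 0 \<Longrightarrow> exp (-1/(3*y/2)) * exp (-1/(3*y)) * exp (-1/(y powr a)) = exp (-(1/y + y powr -a))"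
proof -
  assume y: "y > 0"
  have "-1/(3*y/2) + -1/(3*y) + -1/(y powr a) = -(1/y + y powr -a)" using y by (simp add: powr_minus field_simps)
  thus ?thesis by (simp add: exp_add[symmetric])
qed

lemma marg_prob: assumes "n \<ge> 1" "y > 0"
  shows "prob {\<omega> \<in> space M. Y n x \<omega> \<le> y} = exp (-(1/y + y powr - \<alpha> x))"
proof -
  have nn: "n - 1 \<noteq> n" using assms by simp
  have p0: "prob {\<omega> \<in> space M. Y n x \<omega> \<le> y} = (\<Prod>j\<in>JU n x. prob {\<omega> \<in> space M. W j \<omega> \<in> BU n x y j})"
    unfolding marg_set[OF assms] by (rule indep_prod[OF JU_fin(1) JU_sub[OF assms(1)] JU_fin(2) BU_borel])
  have f1: "prob {\<omega> \<in> space M. Xh n x \<omega> \<in> {..3*y/2}} = exp (-1/(3*y/2))" using assms by (intro prob_X) simp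
  have f2: "prob {\<omega> \<in> space M. Xh (n-1) x \<omega> \<in> {..3*y}} = exp (-1/(3*y))" using assms by (intro prob_X) simp
  have f3: "prob {\<omega> \<in> space M. Z n \<omega> \<in> Sset (\<alpha> x) y} = exp (-1/(y powr \<alpha> x))"
    using assms apos[of x] by (intro prob_Z) (auto simp: Sset_pos Sset_borel)
  have "(\<Prod>j\<in>JU n x. prob {\<omega> \<in> space M. W j \<omega> \<in> BU n x y j}) = exp (-1/(3*y/2)) * exp (-1/(3*y)) * exp (-1/(y powr \<alpha> x))"
    unfolding JU_def using nn by (simp add: BU_def W_def f1[simplified] f2[simplified] f3)
  also have "\<dots> = exp (-(1/y + y powr - \<alpha> x))" using exp3 assms by simp
  finally show ?thesis using p0 by simp
qed

lemma Ymeas: "n \<ge> 1 \<Longrightarrow> Y n x \<in> borel_measurable M"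
  unfolding Yfield_def Xfield_def using Xmeas[of n x] Xmeas[of "n-1" x] Zmeas[of n] by measurable

lemma incl_excl:
  fixes U V :: "'a \<Rightarrow> real" and y :: real
  assumes "U \<in> borel_measurable M" "V \<in> borel_measurable M"
  shows "prob {\<omega> \<in> space M. V \<omega> > y \<and> U \<omega> > y} = 1 - prob {\<omega> \<in> space M. V \<omega> \<le> y}
     - prob {\<omega> \<in> space M. U \<omega> \<le> y} + prob {\<omega> \<in> space M. V \<omega> \<le> y \<and> U \<omega> \<le> y}"
proof -
  let ?A = "{\<omega> \<in> space M. V \<omega> \<le> y}" and ?B = "{\<omega> \<in> space M. U \<omega> \<le> y}"
  have A: "?A \<in> events" using measurable_sets[OF assms(2) atMost_borel[of y]] by (simp add: vimage_def Int_def conj_commute)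
  have B: "?B \<in> events" using measurable_sets[OF assms(1) atMost_borel[of y]] by (simp add: vimage_def Int_def conj_commute)
  have "{\<omega> \<in> space M. V \<omega> > y \<and> U \<omega> > y} = space M - (?A \<union> ?B)" by auto
  hence "prob {\<omega> \<in> space M. V \<omega> > y \<and> U \<omega> > y} = 1 - prob (?A \<union> ?B)" using A B by (simp add: prob_compl)
  also have "prob (?A \<union> ?B) = prob ?A + prob (?B - ?A)" using A B by (rule finite_measure_Union')
  also have "prob (?B - ?A) = prob ?B - prob (?B \<inter> ?A)" using B A by (rule finite_measure_Diff')
  also have "?B \<inter> ?A = {\<omega> \<in> space M. V \<omega> \<le> y \<and> U \<omega> \<le> y}" by auto
  finally show ?thesis by simp
qed

lemma denom:
  fixes U :: "'a \<Rightarrow> real" and y :: real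
  assumes "U \<in> borel_measurable M"
  shows "prob {\<omega> \<in> space M. U \<omega> > y} = 1 - prob {\<omega> \<in> space M. U \<omega> \<le> y}"
proof -
  have A: "{\<omega> \<in> space M. U \<omega> \<le> y} \<in> events" using measurable_sets[OF assms(1) atMost_borel[of y]] by (simp add: vimage_def Int_def conj_commute)
  have "{\<omega> \<in> space M. U \<omega> > y} = space M - {\<omega> \<in> space M. U \<omega> \<le> y}" by auto
  thus ?thesis using A by (simp add: prob_compl)
qed

lemma joint_indep:
  assumes "n \<ge> 1" "m > n" "x \<noteq> x' \<or> m \<noteq> n + 1" "y > 0"
  shows "prob {\<omega> \<in> space M. Y m x' \<omega> \<le> y \<and> Y n x \<omega> \<le> y}
       = prob {\<omega> \<in> space M. Y m x' \<omega> \<le> y} * prob {\<omega> \<in> space M. Y n x \<omega> \<le> y}"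
proof -
  have m1: "m \<ge> 1" using assms by simp
  have disj: "JU m x' \<inter> JU n x = {}" unfolding JU_def using assms by auto
  define B where "B j = (if j \<in> JU m x' then BU m x' y j else BU n x y j)" for j
  have "{\<omega> \<in> space M. Y m x' \<omega> \<le> y \<and> Y n x \<omega> \<le> y} = {\<omega> \<in> space M. \<forall>j\<in>JU m x' \<union> JU n x. W j \<omega> \<in> B j}"
  proof -
    have e1: "Y m x' \<omega> \<le> y \<longleftrightarrow> (\<forall>j\<in>JU m x'. W j \<omega> \<in> BU m x' y j)" if "\<omega> \<in> space M" for \<omega>
      using marg_set[OF m1 assms(4), of x'] that unfolding set_eq_iff by blast
    have e2: "Y n x \<omega> \<le> y \<longleftrightarrow> (\<forall>j\<in>JU n x. W j \<omega> \<in> BU n x y j)" if "\<omega> \<in> space M" for \<omega>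
      using marg_set[OF assms(1) assms(4), of x] that unfolding set_eq_iff by blast
    have b1: "\<forall>j\<in>JU m x'. B j = BU m x' y j" by (simp add: B_def)
    have b2: "\<forall>j\<in>JU n x. B j = BU n x y j" using disj by (auto simp: B_def)
    show ?thesis unfolding ball_Un using e1 e2 b1 b2 by auto
  qed
  hence "prob {\<omega> \<in> space M. Y m x' \<omega> \<le> y \<and> Y n x \<omega> \<le> y} = (\<Prod>j\<in>JU m x' \<union> JU n x. prob {\<omega> \<in> space M. W j \<omega> \<in> B j})"
    using JU_fin JU_sub[OF m1] JU_sub[OF assms(1)] by (simp, intro indep_prod) (auto simp: B_def BU_borel)
  also have "\<dots> = (\<Prod>j\<in>JU m x'. prob {\<omega> \<in> space M. W j \<omega> \<in> B j}) * (\<Prod>j\<in>JU n x. prob {\<omega> \<in> space M. W j \<omega> \<in> B j})"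
    using disj JU_fin by (intro prod.union_disjoint) auto
  also have "(\<Prod>j\<in>JU m x'. prob {\<omega> \<in> space M. W j \<omega> \<in> B j}) = (\<Prod>j\<in>JU m x'. prob {\<omega> \<in> space M. W j \<omega> \<in> BU m x' y j})"
    unfolding B_def by (intro prod.cong) auto
  also have "(\<Prod>j\<in>JU n x. prob {\<omega> \<in> space M. W j \<omega> \<in> B j}) = (\<Prod>j\<in>JU n x. prob {\<omega> \<in> space M. W j \<omega> \<in> BU n x y j})"
    unfolding B_def using disj by (intro prod.cong) auto
  also have "(\<Prod>j\<in>JU m x'. prob {\<omega> \<in> space M. W j \<omega> \<in> BU m x' y j}) = prob {\<omega> \<in> space M. Y m x' \<omega> \<le> y}"
    unfolding marg_set[OF m1 assms(4)] by (rule indep_prod[OF JU_fin(1) JU_sub[OF m1] JU_fin(2) BU_borel, symmetric])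
  also have "(\<Prod>j\<in>JU n x. prob {\<omega> \<in> space M. W j \<omega> \<in> BU n x y j}) = prob {\<omega> \<in> space M. Y n x \<omega> \<le> y}"
    unfolding marg_set[OF assms(1,4)] by (rule indep_prod[OF JU_fin(1) JU_sub[OF assms(1)] JU_fin(2) BU_borel, symmetric])
  finally show ?thesis .
qed


lemma exp5: fixes y a :: real shows "y > 0 \<Longrightarrow>
  exp (-1/(3*y/2)) * (exp (-1/(3*y/2)) * (exp (-1/(3*y)) * (exp (-1/(y powr a)) * exp (-1/(y powr a)))))
   = exp (-(5/(3*y) + 2 * y powr -a))"
proof -
  assume y: "y > 0"
  have "-1/(3*y/2) + (-1/(3*y/2) + (-1/(3*y) + (-1/(y powr a) + -1/(y powr a)))) = -(5/(3*y) + 2 * y powr -a)"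
    using y by (simp add: powr_minus field_simps)
  thus ?thesis by (simp add: exp_add[symmetric])
qed

lemma inv_min: fixes p q :: real shows "p > 0 \<Longrightarrow> q > 0 \<Longrightarrow> 1 / min p q = max (1/q) (1/p)"
  by (auto simp: min_def max_def divide_simps)

lemma exp5b: fixes y t :: real shows "y > 0 \<Longrightarrow>
  exp (-1/(3*y/2)) * (exp (-1/(3*y)) * (exp (-1/(3*y/2)) * (exp (-1/(3*y)) * exp (-1/t))))
   = exp (-(2/y + 1/t))"
proof -
  assume y: "y > 0"
  have "-1/(3*y/2) + (-1/(3*y) + (-1/(3*y/2) + (-1/(3*y) + -1/t))) = -(2/y + 1/t)"
    using y by (simp add: field_simps)
  thus ?thesis by (simp add: exp_add[symmetric])
qed

lemma joint1: assumes "n \<ge> 1" "y > 0"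
  shows "prob {\<omega> \<in> space M. Y (n+1) x \<omega> \<le> y \<and> Y n x \<omega> \<le> y} = exp (-(5/(3*y) + 2 * y powr - \<alpha> x))"
proof -
  define J :: "((nat \<times> (real^2)) + nat) set" where "J = {Inl (n+1, x), Inl (n, x), Inl (n-1, x), Inr (n+1), Inr n}"
  define B :: "((nat \<times> (real^2)) + nat) \<Rightarrow> real set" where "B j = (case j of Inl (k, _) \<Rightarrow> if k = n - 1 then {..3*y} else {..3*y/2} | Inr _ \<Rightarrow> Sset (\<alpha> x) y)" for j
  have Jsub: "J \<subseteq> II" unfolding J_def using assms by (auto simp: image_iff)
  have nn: "n - 1 \<noteq> n" "n + 1 \<noteq> n - 1" "n + 1 \<noteq> n" "n + 1 - 1 = n" using assms by auto
  have "{\<omega> \<in> space M. Y (n+1) x \<omega> \<le> y \<and> Y n x \<omega> \<le> y} = {\<omega> \<in> space M. \<forall>j\<in>J. W j \<omega> \<in> B j}"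
    unfolding J_def B_def using assms nn by (auto simp: Y_le_iff W_def Sset_def)
  hence p0: "prob {\<omega> \<in> space M. Y (n+1) x \<omega> \<le> y \<and> Y n x \<omega> \<le> y} = (\<Prod>j\<in>J. prob {\<omega> \<in> space M. W j \<omega> \<in> B j})"
    by (simp only:) (rule indep_prod[OF _ Jsub], auto simp: J_def B_def Sset_borel split: sum.split)
  have f1: "prob {\<omega> \<in> space M. Xh k x \<omega> \<in> {..3*y/2}} = exp (-1/(3*y/2))" for k using assms by (intro prob_X) simp
  have f2: "prob {\<omega> \<in> space M. Xh k x \<omega> \<in> {..3*y}} = exp (-1/(3*y))" for k using assms by (intro prob_X) simp
  have f3: "prob {\<omega> \<in> space M. Z k \<omega> \<in> Sset (\<alpha> x) y} = exp (-1/(y powr \<alpha> x))" if "k \<ge> 1" for k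
    using assms apos[of x] that by (intro prob_Z) (auto simp: Sset_pos Sset_borel)
  have "(\<Prod>j\<in>J. prob {\<omega> \<in> space M. W j \<omega> \<in> B j}) =
     exp (-1/(3*y/2)) * (exp (-1/(3*y/2)) * (exp (-1/(3*y)) * (exp (-1/(y powr \<alpha> x)) * exp (-1/(y powr \<alpha> x)))))"
    unfolding J_def using nn assms by (simp add: B_def W_def f1[simplified] f2[simplified] f3)
  also have "\<dots> = exp (-(5/(3*y) + 2 * y powr - \<alpha> x))" using exp5 assms by simp
  finally show ?thesis using p0 by simp
qed

lemma joint3: assumes "n \<ge> 1" "y > 0" "x \<noteq> x'"
  shows "prob {\<omega> \<in> space M. Y n x' \<omega> \<le> y \<and> Y n x \<omega> \<le> y} = exp (-(2/y + max (y powr - \<alpha> x) (y powr - \<alpha> x')))"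
proof -
  define J :: "((nat \<times> (real^2)) + nat) set" where "J = {Inl (n, x'), Inl (n-1, x'), Inl (n, x), Inl (n-1, x), Inr n}"
  define B :: "((nat \<times> (real^2)) + nat) \<Rightarrow> real set" where "B j = (case j of Inl (k, _) \<Rightarrow> if k = n then {..3*y/2} else {..3*y} | Inr _ \<Rightarrow> Sset (\<alpha> x') y \<inter> Sset (\<alpha> x) y)" for j
  have Jsub: "J \<subseteq> II" unfolding J_def using assms by (auto simp: image_iff)
  have nn: "n - 1 \<noteq> n" using assms by auto
  have "{\<omega> \<in> space M. Y n x' \<omega> \<le> y \<and> Y n x \<omega> \<le> y} = {\<omega> \<in> space M. \<forall>j\<in>J. W j \<omega> \<in> B j}"
    unfolding J_def B_def using assms nn by (auto simp: Y_le_iff W_def Sset_def)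
  hence p0: "prob {\<omega> \<in> space M. Y n x' \<omega> \<le> y \<and> Y n x \<omega> \<le> y} = (\<Prod>j\<in>J. prob {\<omega> \<in> space M. W j \<omega> \<in> B j})"
    by (simp only:) (rule indep_prod[OF _ Jsub], auto simp: J_def B_def Sset_borel split: sum.split)
  have f1: "prob {\<omega> \<in> space M. Xh k z \<omega> \<in> {..3*y/2}} = exp (-1/(3*y/2))" for k z using assms by (intro prob_X) simp
  have f2: "prob {\<omega> \<in> space M. Xh k z \<omega> \<in> {..3*y}} = exp (-1/(3*y))" for k z using assms by (intro prob_X) simp
  have f3: "prob {\<omega> \<in> space M. Z n \<omega> \<in> Sset (\<alpha> x') y \<inter> Sset (\<alpha> x) y} = exp (-1/min (y powr \<alpha> x') (y powr \<alpha> x))"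
    using assms apos[of x] apos[of x'] by (intro prob_Z) (auto simp: Sset2_pos Sset_borel)
  have "(\<Prod>j\<in>J. prob {\<omega> \<in> space M. W j \<omega> \<in> B j}) =
     exp (-1/(3*y/2)) * (exp (-1/(3*y)) * (exp (-1/(3*y/2)) * (exp (-1/(3*y)) * exp (-1/min (y powr \<alpha> x') (y powr \<alpha> x)))))"
    unfolding J_def using nn assms by (simp add: B_def W_def f1[simplified] f2[simplified] f3[simplified])
  also have "\<dots> = exp (-(2/y + 1/min (y powr \<alpha> x') (y powr \<alpha> x)))" using exp5b assms by simp
  also have "1/min (y powr \<alpha> x') (y powr \<alpha> x) = max (y powr - \<alpha> x) (y powr - \<alpha> x')"
    using assms inv_min[of "y powr \<alpha> x'" "y powr \<alpha> x"] by (simp add: powr_minus divide_inverse)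
  finally show ?thesis using p0 by simp
qed


lemma ratio_eq:
  assumes "n \<ge> 1" "m \<ge> 1" "y > 0"
  shows "measure M {\<omega> \<in> space M. Y m x' \<omega> > y \<and> Y n x \<omega> > y} / measure M {\<omega> \<in> space M. Y n x \<omega> > y}
    = (1 - exp (-(1/y + y powr - \<alpha> x')) - exp (-(1/y + y powr - \<alpha> x))
        + prob {\<omega> \<in> space M. Y m x' \<omega> \<le> y \<and> Y n x \<omega> \<le> y}) / (1 - exp (-(1/y + y powr - \<alpha> x)))"
  using incl_excl[OF Ymeas[OF assms(1)] Ymeas[OF assms(2)], of y] denom[OF Ymeas[OF assms(1)], of y]
    marg_prob[OF assms(1,3), of x] marg_prob[OF assms(2,3), of x'] by simp

lemma main1:
  assumes "n \<ge> 1" "r \<ge> 1"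
  shows "tail_dep M (Y (n + r) x) (Y n x) (if \<alpha> x < 1 \<or> r > 1 then 0 else if \<alpha> x = 1 then 1/6 else 1/3)"
  unfolding tail_dep_def
proof (cases "r = 1")
  case True
  have tv: "(if \<alpha> x < 1 \<or> r > 1 then 0 else if \<alpha> x = 1 then 1/6 else 1/3) = cval (\<alpha> x) / 3"
    using True by (simp add: cval_def)
  show "((\<lambda>y. measure M {\<omega> \<in> space M. Y (n + r) x \<omega> > y \<and> Y n x \<omega> > y} / measure M {\<omega> \<in> space M. Y n x \<omega> > y})
      \<longlongrightarrow> (if \<alpha> x < 1 \<or> r > 1 then 0 else if \<alpha> x = 1 then 1/6 else 1/3)) at_top"
    unfolding tv
  proof (rule Lim_transform_eventually[OF L1[OF apos[of x]] eventually_mono[OF eventually_gt_at_top[of 0]]])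
    fix y :: real assume y: "y > 0"
    have m1: "n + r \<ge> 1" using assms by simp
    show "(1 - exp(-(1/y + y powr - \<alpha> x)) - exp(-(1/y + y powr - \<alpha> x))
              + exp(-(5/(3*y) + 2 * y powr - \<alpha> x))) / (1 - exp(-(1/y + y powr - \<alpha> x)))
       = measure M {\<omega> \<in> space M. Y (n + r) x \<omega> > y \<and> Y n x \<omega> > y} / measure M {\<omega> \<in> space M. Y n x \<omega> > y}"
      using ratio_eq[OF assms(1) m1 y, of x x] joint1[OF assms(1) y, of x] True by simp
  qed
next
  case False
  hence r2: "r > 1" using assms by simp
  have tv: "(if \<alpha> x < 1 \<or> r > 1 then 0 else if \<alpha> x = 1 then 1/6 else (1/3::real)) = 0" using r2 by simp
  show "((\<lambda>y. measure M {\<omega> \<in> space M. Y (n + r) x \<omega> > y \<and> Y n x \<omega> > y} / measure M {\<omega> \<in> space M. Y n x \<omega> > y})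
      \<longlongrightarrow> (if \<alpha> x < 1 \<or> r > 1 then 0 else if \<alpha> x = 1 then 1/6 else 1/3)) at_top"
    unfolding tv
  proof (rule Lim_transform_eventually[OF L2[OF apos[of x] apos[of x]] eventually_mono[OF eventually_gt_at_top[of 0]]])
    fix y :: real assume y: "y > 0"
    have m1: "n + r \<ge> 1" using assms by simp
    have m: "n + r > n" "x \<noteq> x \<or> n + r \<noteq> n + 1" using r2 by auto
    show "(1 - exp(-(1/y + y powr - \<alpha> x)) - exp(-(1/y + y powr - \<alpha> x))
              + exp(-(1/y + y powr - \<alpha> x)) * exp(-(1/y + y powr - \<alpha> x))) / (1 - exp(-(1/y + y powr - \<alpha> x)))
       = measure M {\<omega> \<in> space M. Y (n + r) x \<omega> > y \<and> Y n x \<omega> > y} / measure M {\<omega> \<in> space M. Y n x \<omega> > y}"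
      using ratio_eq[OF assms(1) m1 y, of x x] joint_indep[OF assms(1) m y]
        marg_prob[OF assms(1) y, of x] marg_prob[OF m1 y, of x] by simp
  qed
qed

lemma main2:
  assumes "n \<ge> 1" "r \<ge> 1" "x \<noteq> x'"
  shows "tail_dep M (Y (n + r) x') (Y n x) 0"
  unfolding tail_dep_def
proof (rule Lim_transform_eventually[OF L2[OF apos[of x] apos[of x']] eventually_mono[OF eventually_gt_at_top[of 0]]])
  fix y :: real assume y: "y > 0"
  have m1: "n + r \<ge> 1" using assms by simp
  have m: "n + r > n" "x \<noteq> x' \<or> n + r \<noteq> n + 1" using assms by auto
  show "(1 - exp(-(1/y + y powr - \<alpha> x')) - exp(-(1/y + y powr - \<alpha> x))
            + exp(-(1/y + y powr - \<alpha> x')) * exp(-(1/y + y powr - \<alpha> x))) / (1 - exp(-(1/y + y powr - \<alpha> x)))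
     = measure M {\<omega> \<in> space M. Y (n + r) x' \<omega> > y \<and> Y n x \<omega> > y} / measure M {\<omega> \<in> space M. Y n x \<omega> > y}"
    using ratio_eq[OF assms(1) m1 y, of x' x] joint_indep[OF assms(1) m y]
      marg_prob[OF assms(1) y, of x] marg_prob[OF m1 y, of x'] by simp
qed

lemma main3:
  assumes "n \<ge> 1" "x \<noteq> x'"
  shows "tail_dep M (Y n x') (Y n x)
     (if \<alpha> x' \<le> \<alpha> x \<and> \<alpha> x < 1 then 1 else if \<alpha> x' \<le> \<alpha> x \<and> \<alpha> x = 1 then 1/2 else 0)"
  unfolding tail_dep_def tval_def[symmetric]
proof (rule Lim_transform_eventually[OF L3[OF apos[of x] apos[of x']] eventually_mono[OF eventually_gt_at_top[of 0]]])
  fix y :: real assume y: "y > 0"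
  show "(1 - exp(-(1/y + y powr - \<alpha> x')) - exp(-(1/y + y powr - \<alpha> x))
              + exp(-(2/y + max (y powr - \<alpha> x) (y powr - \<alpha> x')))) / (1 - exp(-(1/y + y powr - \<alpha> x)))
     = measure M {\<omega> \<in> space M. Y n x' \<omega> > y \<and> Y n x \<omega> > y} / measure M {\<omega> \<in> space M. Y n x \<omega> > y}"
    using ratio_eq[OF assms(1) assms(1) y, of x' x] joint3[OF assms(1) y assms(2)] by simp
qed

end

theorem mainTheorem3:
  fixes M :: "'a measure"
    and Xh :: "nat \<Rightarrow> real^2 \<Rightarrow> 'a \<Rightarrow> real"
    and Z :: "nat \<Rightarrow> 'a \<Rightarrow> real"
    and \<alpha> :: "real^2 \<Rightarrow> real"
  assumes "prob_space M"
    and "prob_space.indep_vars M (\<lambda>_. borel)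
           (\<lambda>i. case i of Inl (n, x) \<Rightarrow> Xh n x | Inr n \<Rightarrow> Z n)
           (range Inl \<union> Inr ` {1..})"
    and "\<And>n x. std_frechet M (Xh n x)"
    and "\<And>n. n \<ge> 1 \<Longrightarrow> std_frechet M (Z n)"
    and "\<And>x. \<alpha> x > 0"
  shows "(\<forall>n\<ge>1. \<forall>x. \<forall>r\<ge>1.
            tail_dep M (Yfield Xh Z \<alpha> (n + r) x) (Yfield Xh Z \<alpha> n x)
              (if \<alpha> x < 1 \<or> r > 1 then 0
               else if \<alpha> x = 1 then 1/6 else 1/3))
       \<and> (\<forall>n\<ge>1. \<forall>x x'. \<forall>r\<ge>1. x \<noteq> x' \<longrightarrow>
            tail_dep M (Yfield Xh Z \<alpha> (n + r) x') (Yfield Xh Z \<alpha> n x) 0)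
       \<and> (\<forall>n\<ge>1. \<forall>x x'. x \<noteq> x' \<longrightarrow>
            tail_dep M (Yfield Xh Z \<alpha> n x') (Yfield Xh Z \<alpha> n x)
              (if \<alpha> x' \<le> \<alpha> x \<and> \<alpha> x < 1 then 1
               else if \<alpha> x' \<le> \<alpha> x \<and> \<alpha> x = 1 then 1/2 else 0))"
  proof -
  interpret frsetup M Xh Z \<alpha>
    unfolding frsetup_def frsetup_axioms_def using assms by auto
  show ?thesis using main1 main2 main3 by blast
qed

end
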